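(* Let $m_1,m_2$ be positive real numbers with $m_1\leq 1.8m_2$. If $G\in\mathcal{G}_{m_1,m_2}$, then the disjoint union $G\cup K_t$ belongs to $\mathcal{G}_{m_1,m_2}$ for every integer $1\leq t\leq\lfloor 2m_1\rfloor$.
   Context: All graphs are finite and simple. For a graph $H$, $|H|$ denotes its number of vertices and $\lVert H\rVert$ its number of edges. For real numbers $m_1,m_2$, $\mathcal{G}_{m_1,m_2}$ is the class of graphs $G$ such that $\lVert H\rVert\leq m_1|H|$ for every subgraph $H$ of $G$, and $\lVert H\rVert\leq m_2|H|$ for every bipartite subgraph $H$ of $G$. $G\cup K_t$ denotes the vertex-disjoint union of $G$ and the complete graph on $t$ vertices. *)

theory Defs
  imports Complex_Main
begin

type_synonym 'a sgraph = "'a set \<times> 'a set set"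

definition wf_graph :: "'a sgraph \<Rightarrow> bool" where
  "wf_graph G \<longleftrightarrow> finite (fst G) \<and>
     (\<forall>e\<in>snd G. \<exists>u v. u \<noteq> v \<and> e = {u, v} \<and> u \<in> fst G \<and> v \<in> fst G)"

definition subgraph :: "'a sgraph \<Rightarrow> 'a sgraph \<Rightarrow> bool" where
  "subgraph H G \<longleftrightarrow> wf_graph H \<and> fst H \<subseteq> fst G \<and> snd H \<subseteq> snd G"

definition bipartite :: "'a sgraph \<Rightarrow> bool" where
  "bipartite H \<longleftrightarrow> (\<exists>A. \<forall>e\<in>snd H. \<exists>u v. e = {u, v} \<and> u \<in> A \<and> v \<notin> A)"

definition graph_class :: "real \<Rightarrow> real \<Rightarrow> 'a sgraph \<Rightarrow> bool" where
  "graph_class m1 m2 G \<longleftrightarrow> wf_graph G \<and>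
     (\<forall>H. subgraph H G \<longrightarrow> real (card (snd H)) \<le> m1 * real (card (fst H))) \<and>
     (\<forall>H. subgraph H G \<and> bipartite H \<longrightarrow> real (card (snd H)) \<le> m2 * real (card (fst H)))"

definition union_K :: "'a sgraph \<Rightarrow> nat \<Rightarrow> ('a + nat) sgraph" where
  "union_K G t = (Inl ` fst G \<union> Inr ` {0..<t},
     (\<lambda>e. Inl ` e) ` snd G \<union> {{Inr i, Inr j} | i j. i < t \<and> j < t \<and> i \<noteq> j})"

end

theory Submission
  imports Defs
begin

lemma half_le: "2 * (x div 2) \<le> (x::nat)" by simp

lemma wf_edge: "wf_graph G \<Longrightarrow> e \<in> snd G \<Longrightarrow> \<exists>u v. u \<noteq> v \<and> e = {u, v} \<and> u \<in> fst G \<and> v \<in> fst G"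
  unfolding wf_graph_def by (elim conjE) (erule bspec)

lemma wf_edge_sub: "wf_graph G \<Longrightarrow> e \<in> snd G \<Longrightarrow> e \<subseteq> fst G"
proof -
  assume "wf_graph G" "e \<in> snd G"
  from wf_edge[OF this] obtain u v where "e = {u, v}" "u \<in> fst G" "v \<in> fst G" by blast
  thus ?thesis by simp
qed

lemma wf_fin_edges: "wf_graph H \<Longrightarrow> finite (snd H)"
proof -
  assume w: "wf_graph H"
  hence "snd H \<subseteq> Pow (fst H)" using wf_edge_sub[OF w] by blast
  moreover have "finite (fst H)" using w unfolding wf_graph_def by (elim conjE)
  ultimately show ?thesis by (meson finite_Pow_iff finite_subset)
qed

lemma wf_union: "wf_graph G \<Longrightarrow> wf_graph (union_K G t)"
proof -
  assume w: "wf_graph G"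
  have f: "finite (fst (union_K G t))" using w unfolding wf_graph_def union_K_def by simp
  have main: "\<exists>u v. u \<noteq> v \<and> e = {u, v} \<and> u \<in> fst (union_K G t) \<and> v \<in> fst (union_K G t)"
    if e: "e \<in> snd (union_K G t)" for e
  proof -
    consider (a) f where "f \<in> snd G" "e = Inl ` f" | (b) i j where "e = {Inr i, Inr j}" "i < t" "j < t" "i \<noteq> j"
      using e unfolding union_K_def by auto
    thus ?thesis
    proof cases
      case a
      then obtain u v where "u \<noteq> v" "f = {u, v}" "u \<in> fst G" "v \<in> fst G" using wf_edge[OF w] by blast
      thus ?thesis using a by (intro exI[of _ "Inl u"] exI[of _ "Inl v"]) (auto simp: union_K_def)
    next
      case b
      thus ?thesis by (intro exI[of _ "Inr i"] exI[of _ "Inr j"]) (auto simp: union_K_def)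
    qed
  qed
  show ?thesis unfolding wf_graph_def
  proof (intro conjI ballI)
    show "finite (fst (union_K G t))" by (rule f)
    fix e assume "e \<in> snd (union_K G t)"
    thus "\<exists>u v. u \<noteq> v \<and> e = {u, v} \<and> u \<in> fst (union_K G t) \<and> v \<in> fst (union_K G t)" by (rule main)
  qed
qed

lemma decomp:
  fixes H :: "('a + nat) sgraph"
  assumes sub: "subgraph H (union_K G t)" and wG: "wf_graph G"
  shows "\<exists>H1 s p. subgraph H1 G \<and> card (snd H) \<le> card (snd H1) + p
     \<and> card (fst H) = card (fst H1) + s \<and> s \<le> t \<and> p \<le> s choose 2
     \<and> (bipartite H \<longrightarrow> bipartite H1 \<and> 4 * p \<le> s^2)"
proof -
  define V1 where "V1 = {x. Inl x \<in> fst H}"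
  define E1 where "E1 = {e \<in> snd G. Inl ` e \<in> snd H}"
  define V2 where "V2 = {i. Inr i \<in> fst H}"
  define P1 where "P1 = snd H \<inter> ((\<lambda>e. Inl ` e) ` snd G)"
  define P2 where "P2 = snd H - P1"
  have wH: "wf_graph H" using sub unfolding subgraph_def by blast
  have finH: "finite (fst H)" using wH unfolding wf_graph_def by blast
  have finE: "finite (snd H)" using wf_fin_edges[OF wH] .
  have VH: "fst H \<subseteq> Inl ` fst G \<union> Inr ` {0..<t}" using sub unfolding subgraph_def union_K_def by simp
  have EH: "snd H \<subseteq> (\<lambda>e. Inl ` e) ` snd G \<union> {{Inr i, Inr j} | i j. i < t \<and> j < t \<and> i \<noteq> j}"
    using sub unfolding subgraph_def union_K_def by simp
  have V1G: "V1 \<subseteq> fst G" using VH unfolding V1_def by auto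
  have V2t: "V2 \<subseteq> {0..<t}" using VH unfolding V2_def by auto
  have finG: "finite (fst G)" using wG unfolding wf_graph_def by blast
  have finV1: "finite V1" using V1G finG finite_subset by blast
  have finV2: "finite V2" using V2t finite_subset by blast
  have fstH: "fst H = Inl ` V1 \<union> Inr ` V2" using VH unfolding V1_def V2_def by auto
  have cardV: "card (fst H) = card V1 + card V2"
    unfolding fstH by (subst card_Un_disjoint) (auto simp: finV1 finV2 card_image)
  have s_le: "card V2 \<le> t" using card_mono[OF _ V2t] by simp
  have wH1: "wf_graph (V1, E1)"
    unfolding wf_graph_def
  proof (intro conjI ballI)
    show "finite (fst (V1, E1))" using finV1 by simp
    fix e assume "e \<in> snd (V1, E1)"
    hence e: "e \<in> snd G" "Inl ` e \<in> snd H" unfolding E1_def by auto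
    obtain u v where uv: "u \<noteq> v" "e = {u, v}" using wf_edge[OF wG e(1)] by blast
    have "Inl ` e \<subseteq> fst H" using wf_edge_sub[OF wH e(2)] .
    hence "u \<in> V1" "v \<in> V1" using uv unfolding V1_def by auto
    thus "\<exists>u v. u \<noteq> v \<and> e = {u, v} \<and> u \<in> fst (V1, E1) \<and> v \<in> fst (V1, E1)" using uv by auto
  qed
  have sub1: "subgraph (V1, E1) G" unfolding subgraph_def using wH1 V1G E1_def by auto
  have P1eq: "P1 = (\<lambda>e. Inl ` e) ` E1" unfolding P1_def E1_def by auto
  have injI: "inj_on (\<lambda>e. Inl ` e) E1"
    by (rule inj_on_image) (auto intro: inj_on_subset[of Inl UNIV])
  have cP1: "card P1 = card E1" unfolding P1eq by (rule card_image[OF injI])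
  have finP2: "finite P2" unfolding P2_def using finE by simp
  have sHU: "snd H = P1 \<union> P2" unfolding P2_def P1_def by auto
  have cE: "card (snd H) \<le> card E1 + card P2"
    using card_Un_le[of P1 P2] sHU cP1 by simp
  have P2K: "\<And>e. e \<in> P2 \<Longrightarrow> \<exists>i j. e = {Inr i, Inr j} \<and> i \<noteq> j \<and> i \<in> V2 \<and> j \<in> V2"
  proof -
    fix e assume eP: "e \<in> P2"
    hence "e \<in> snd H" "e \<notin> (\<lambda>e. Inl ` e) ` snd G" unfolding P2_def P1_def by auto
    with EH obtain i j where ij: "e = {Inr i, Inr j}" "i \<noteq> j" by blast
    have "e \<subseteq> fst H" using wf_edge_sub[OF wH \<open>e \<in> snd H\<close>] .
    thus "\<exists>i j. e = {Inr i, Inr j} \<and> i \<noteq> j \<and> i \<in> V2 \<and> j \<in> V2" using ij unfolding V2_def by auto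
  qed
  have P2sub: "P2 \<subseteq> (\<lambda>B. Inr ` B) ` {B. B \<subseteq> V2 \<and> card B = 2}"
  proof
    fix e assume "e \<in> P2"
    then obtain i j where ij: "e = {Inr i, Inr j}" "i \<noteq> j" "i \<in> V2" "j \<in> V2" using P2K by blast
    hence "e = Inr ` {i, j}" by auto
    moreover have "{i, j} \<in> {B. B \<subseteq> V2 \<and> card B = 2}" using ij by auto
    ultimately show "e \<in> (\<lambda>B. Inr ` B) ` {B. B \<subseteq> V2 \<and> card B = 2}" by blast
  qed
  have cP2: "card P2 \<le> card V2 choose 2"
  proof -
    have fS: "finite {B. B \<subseteq> V2 \<and> card B = 2}"
      using finV2 by (rule rev_finite_subset[OF finite_Pow_iff[THEN iffD2]]) auto
    have "card P2 \<le> card ((\<lambda>B. (Inr ` B :: ('a + nat) set)) ` {B. B \<subseteq> V2 \<and> card B = 2})"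
      using fS P2sub by (intro card_mono) auto
    also have "\<dots> \<le> card {B. B \<subseteq> V2 \<and> card B = 2}" using fS by (rule card_image_le)
    also have "\<dots> = card V2 choose 2" using n_subsets[OF finV2] by simp
    finally show ?thesis .
  qed
  have bip: "bipartite H \<Longrightarrow> bipartite (V1, E1) \<and> 4 * card P2 \<le> (card V2)^2"
  proof -
    assume "bipartite H"
    then obtain A where A: "\<forall>e\<in>snd H. \<exists>u v. e = {u, v} \<and> u \<in> A \<and> v \<notin> A" unfolding bipartite_def by blast
    have b1: "bipartite (V1, E1)"
      unfolding bipartite_def
    proof (intro exI[of _ "{x. Inl x \<in> A}"] ballI)
      fix e assume "e \<in> snd (V1, E1)"
      hence e: "e \<in> snd G" "Inl ` e \<in> snd H" unfolding E1_def by auto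
      from bspec[OF A e(2)] obtain u v where uv: "Inl ` e = {u, v}" "u \<in> A" "v \<notin> A" by blast
      have "u \<in> Inl ` e" "v \<in> Inl ` e" using uv(1) by simp_all
      then obtain x y where x: "x \<in> e" "u = Inl x" and y: "y \<in> e" "v = Inl y" by blast
      have "e = {x, y}"
      proof -
        have "Inl ` e = Inl ` {x, y}" using uv x y by auto
        thus ?thesis by (simp only: inj_image_eq_iff[OF inj_Inl])
      qed
      thus "\<exists>u v. e = {u, v} \<and> u \<in> {x. Inl x \<in> A} \<and> v \<notin> {x. Inl x \<in> A}" using uv x y by auto
    qed
    define Aa where "Aa = {i \<in> V2. Inr i \<in> A}"
    define Bb where "Bb = {i \<in> V2. Inr i \<notin> A}"
    have P2s: "P2 \<subseteq> (\<lambda>(i, j). {Inr i, Inr j}) ` (Aa \<times> Bb)"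
    proof
      fix e assume eP: "e \<in> P2"
      then obtain i j where ij: "e = {Inr i, Inr j}" "i \<noteq> j" "i \<in> V2" "j \<in> V2" using P2K by blast
      have "e \<in> snd H" using eP unfolding P2_def by auto
      from bspec[OF A this] obtain u v where uv: "e = {u, v}" "u \<in> A" "v \<notin> A" by blast
      have uvi: "u \<in> {Inr i, Inr j}" "v \<in> {Inr i, Inr j}" using uv ij by auto
      show "e \<in> (\<lambda>(i, j). {Inr i, Inr j}) ` (Aa \<times> Bb)"
      proof (cases "Inr i \<in> A")
        case True
        hence "Inr j \<notin> A" using uv uvi by auto
        hence "(i, j) \<in> Aa \<times> Bb" using True ij unfolding Aa_def Bb_def by auto
        thus ?thesis using ij by force
      next
        case False
        hence "Inr j \<in> A" using uv uvi by auto
        hence "(j, i) \<in> Aa \<times> Bb" using False ij unfolding Aa_def Bb_def by auto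
        thus ?thesis using ij by force
      qed
    qed
    have finAB: "finite Aa" "finite Bb" unfolding Aa_def Bb_def using finV2 by auto
    have "card P2 \<le> card ((\<lambda>(i, j). ({Inr i, Inr j} :: ('a + nat) set)) ` (Aa \<times> Bb))"
      using finAB P2s by (intro card_mono) auto
    also have "\<dots> \<le> card (Aa \<times> Bb)" using finAB by (intro card_image_le) auto
    also have "\<dots> = card Aa * card Bb" by (simp add: card_cartesian_product)
    finally have c1: "card P2 \<le> card Aa * card Bb" .
    have "V2 = Aa \<union> Bb" "Aa \<inter> Bb = {}" unfolding Aa_def Bb_def by auto
    hence c2: "card V2 = card Aa + card Bb" using finAB card_Un_disjoint by metis
    have "4 * (card Aa * card Bb) \<le> (card Aa + card Bb)^2"
    proof -
      have "(4::int) * (int (card Aa) * int (card Bb)) \<le> (int (card Aa) + int (card Bb))^2"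
        using sum_squares_ge_zero[of "int (card Aa) - int (card Bb)" 0]
        by (simp add: power2_eq_square algebra_simps)
      hence "int (4 * (card Aa * card Bb)) \<le> int ((card Aa + card Bb)^2)" by simp
      thus ?thesis by (simp only: of_nat_le_iff)
    qed
    thus ?thesis using b1 c1 c2 by simp
  qed
  show ?thesis
    apply (rule exI[of _ "(V1, E1)"], rule exI[of _ "card V2"], rule exI[of _ "card P2"])
    using sub1 cE cardV s_le cP2 bip by simp
qed

theorem lemma3:
  fixes m1 m2 :: real and G :: "'a sgraph" and t :: nat
  assumes "m1 > 0" and "m2 > 0" and "m1 \<le> 1.8 * m2"
    and "graph_class m1 m2 G"
    and "1 \<le> t" and "int t \<le> \<lfloor>2 * m1\<rfloor>"
  shows "graph_class m1 m2 (union_K G t)"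
proof -
  have wG: "wf_graph G" using assms(4) unfolding graph_class_def by blast
  have tm: "real t \<le> 2 * m1" using assms(6) by linarith
  show ?thesis
    unfolding graph_class_def
  proof (intro conjI allI impI)
    show "wf_graph (union_K G t)" using wf_union[OF wG] .
  next
    fix H :: "('a + nat) sgraph" assume sub: "subgraph H (union_K G t)"
    obtain H1 s p where d: "subgraph H1 G" "card (snd H) \<le> card (snd H1) + p"
      "card (fst H) = card (fst H1) + s" "s \<le> t" "p \<le> s choose 2"
      using decomp[OF sub wG] by blast
    have h1: "real (card (snd H1)) \<le> m1 * real (card (fst H1))"
      using assms(4) d(1) unfolding graph_class_def by blast
    have "2 * p \<le> s * (s - 1)" using d(5) half_le[of "s * (s - 1)"] unfolding choose_two by linarith
    hence "real (2 * p) \<le> real (s * (s - 1))" by (simp only: of_nat_le_iff)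
    moreover have "real (s * (s - 1)) = real s * (real s - 1)" by (cases s) (auto simp: algebra_simps)
    moreover have "real (2 * p) = 2 * real p" by simp
    ultimately have p2: "2 * real p \<le> real s * (real s - 1)" by linarith
    have "real s * (real s - 1) \<le> real s * (2 * m1)"
      using d(4) tm by (intro mult_left_mono) auto
    hence "real p \<le> m1 * real s" using p2 by (simp add: algebra_simps)
    thus "real (card (snd H)) \<le> m1 * real (card (fst H))"
      proof -
      have "real (card (snd H)) \<le> real (card (snd H1)) + real p" using d(2) by (metis of_nat_add of_nat_le_iff)
      moreover have "real (card (fst H)) = real (card (fst H1)) + real s" using d(3) by simp
      ultimately show ?thesis using h1 \<open>real p \<le> _\<close> by (simp add: algebra_simps)
    qed
  next
    fix H :: "('a + nat) sgraph" assume sb: "subgraph H (union_K G t) \<and> bipartite H"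
    obtain H1 s p where d: "subgraph H1 G" "card (snd H) \<le> card (snd H1) + p"
      "card (fst H) = card (fst H1) + s" "s \<le> t" "bipartite H1" "4 * p \<le> s^2"
      using decomp[OF conjunct1[OF sb] wG] sb by blast
    have h1: "real (card (snd H1)) \<le> m2 * real (card (fst H1))"
      using assms(4) d(1,5) unfolding graph_class_def by blast
    have "real (4 * p) \<le> real (s ^ 2)" using d(6) by (simp only: of_nat_le_iff)
    hence p2: "4 * real p \<le> real s * real s" by (simp add: power2_eq_square)
    have "real s * real s \<le> real s * (4 * m2)"
      using d(4) tm assms(3) by (intro mult_left_mono) auto
    hence "real p \<le> m2 * real s" using p2 by (simp add: algebra_simps)
    thus "real (card (snd H)) \<le> m2 * real (card (fst H))"
      proof -
      have "real (card (snd H)) \<le> real (card (snd H1)) + real p" using d(2) by (metis of_nat_add of_nat_le_iff)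
      moreover have "real (card (fst H)) = real (card (fst H1)) + real s" using d(3) by simp
      ultimately show ?thesis using h1 \<open>real p \<le> _\<close> by (simp add: algebra_simps)
    qed
  qed
qed

end
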